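(* Fix $\ell \in \{1,2\}$. If $C_{\mathcal{A}_\ell}$ is satisfied by a pointed interpretation $(\mathcal{I}, d)$ (i.e. $d \in (C_{\mathcal{A}_\ell})^{\mathcal{I}}$), then $(\mathcal{I}, d)$ is $\Sigma$-friendly and for every element $e \in \Delta^{\mathcal{I}}$ that is $\mathtt{x}^*$-reachable from $d$ via a path $\rho$ we have $e \in (\mathsf{Acc}_{\mathcal{A}_\ell})^{\mathcal{I}}$ if and only if the $\Sigma$-word represented by $\rho$ belongs to $\mathcal{L}(\mathcal{A}_\ell)$. Moreover, after reinterpreting the concept name $\mathsf{Acc}_{\mathcal{A}_\ell}$, every $\Sigma$-metaword becomes a model of $C_{\mathcal{A}_\ell}$.
   Context: Setting: the description logic $\mathcal{ALC}$ extended with path expressions $\exists \mathcal{L}.C$ / $\forall\mathcal{L}.C$ for visibly-pushdown languages $\mathcal{L}$ (given by visibly-pushdown automata) over role names, and with the Self operator, where $(\exists r.\mathsf{Self})^{\mathcal{I}} = \{ d \mid (d,d) \in r^{\mathcal{I}}\}$. A path $\rho_1\ldots\rho_{n+1}$ in $\mathcal{I}$ is an $\mathcal{L}$-path if some word $w_1\ldots w_n \in \mathcal{L}$ satisfies $(\rho_i,\rho_{i+1}) \in w_i^{\mathcal{I}}$ for all $i$; $e$ is $\mathcal{L}$-reachable from $d$ if there is an $\mathcal{L}$-path from $d$ to $e$; $(\exists\mathcal{L}.C)^{\mathcal{I}}$ is the set of elements that $\mathcal{L}$-reach an element of $C^{\mathcal{I}}$, and $\forall\mathcal{L}.C := \neg\exists\mathcal{L}.\neg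 C$. Fix a finite alphabet $\Sigma$ of role names and deterministic one-counter automata (DOCA) $\mathcal{A}_1, \mathcal{A}_2$ over $\Sigma$; let $\mathcal{C}_1, \mathcal{C}_2$ be DOCA recognizing the complements of $\mathcal{L}(\mathcal{A}_1), \mathcal{L}(\mathcal{A}_2)$. For a DOCA $\mathcal{A}$ over $\Sigma$, $\tilde{\mathcal{A}}$ denotes a visibly-pushdown automaton over the pushdown alphabet $\tilde\Sigma := (\Sigma\times\{c\},\ (\Sigma\times\{i\})\cup\{\mathtt{x}\},\ \Sigma\times\{r\})$ (call, internal, return letters; $\mathtt{x}$ a fresh internal letter, the same for all automata), such that every word in $\mathcal{L}(\tilde{\mathcal{A}})$ has the form $\tilde a_1\mathtt{x}\tilde a_2\mathtt{x}\ldots\mathtt{x}\tilde a_n$ with $\tilde a_j \in \Sigma\times\{c,i,r\}$, and $\mathcal{L}(\mathcal{A}) = \{\pi_1(\tilde a_1)\ldots\pi_1(\tilde a_n) \mid \tilde a_1\mathtt{x}\ldots\mathtt{x}\tilde a_n \in \mathcal{L}(\tilde{\mathcal{A}})\}$, where $\pi_1$ is the projection to the first component. Letters of $\tilde\Sigma$ are treated as role names. A pointed interpretation $(\mathcal{I}, d)$ is $\Sigma$-friendly if for every $e$ that is $\mathtt{x}^*$-reachable from $d$ there is a unique $a\in\Sigma$ such that $e$ carries $\tilde a$-self-loops for all $\tilde a\in\tilde\Sigma$ with $\pi_1(\tilde a)=a$, and no self-loops for all other letters of $\tilde\Sigma$ (including $\mathtt{x}$). This is axiomatised by $C_{\mathrm{fr}}^{\Sigma}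 := \forall \mathtt{x}^*. \bigsqcup_{a\in\Sigma} \sqcap_{b\in\Sigma,\, b\neq a,\, \pi_1(\tilde a)=a,\, \pi_1(\tilde b)=b} \big( \exists\tilde a.\mathsf{Self} \sqcap \neg\exists\tilde b.\mathsf{Self} \sqcap \neg\exists\mathtt{x}.\mathsf{Self}\big)$, where $\sqcap_{\ldots}$ denotes the (finite) conjunction of concepts over all indicated indices. An $\mathtt{x}^*$-path $\rho$ in a $\Sigma$-friendly $(\mathcal{I},d)$ represents the word in $\Sigma^*$ whose $i$-th letter is $a$ iff the $i$-th element of $\rho$ carries an $(a,c)$-self-loop. A $\Sigma$-metaword is a $\Sigma$-friendly $(\mathcal{I}, d)$ with domain $\{0,\ldots,n-1\}$ for some positive $n$, $\mathtt{x}^{\mathcal{I}} = \{(i,i+1) \mid 0\le i\le n-2\}$, and all other role names interpreted as $\emptyset$ or subsets of the diagonal $\{(i,i)\}$. For $\ell\in\{1,2\}$, with a fresh concept name $\mathsf{Acc}_{\mathcal{A}_\ell}$: $C_{\mathcal{A}_\ell} := C_{\mathrm{fr}}^{\Sigma} \sqcap \forall \mathcal{L}(\tilde{\mathcal{A}}_\ell).\mathsf{Acc}_{\mathcal{A}_\ell} \sqcap \forall\mathcal{L}(\tilde{\mathcal{C}}_\ell).\neg\mathsf{Acc}_{\mathcal{A}_\ell}$. *)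

theory Defs
  imports Main
begin

record ('q, 'a) doca =
  d_states :: "'q set"
  d_init   :: 'q
  d_final  :: "'q set"
  d_delta  :: "'q \<Rightarrow> 'a \<Rightarrow> bool \<Rightarrow> 'q \<times> int"

definition doca_wf :: "'a set \<Rightarrow> ('q, 'a) doca \<Rightarrow> bool" where
  "doca_wf \<Sigma> A \<longleftrightarrow> finite (d_states A) \<and> d_init A \<in> d_states A \<and> d_final A \<subseteq> d_states A \<and>
     (\<forall>q \<in> d_states A. \<forall>a \<in> \<Sigma>. \<forall>z.
        fst (d_delta A q a z) \<in> d_states A \<and> snd (d_delta A q a z) \<in> {-1, 0, 1} \<and>
        (z \<longrightarrow> snd (d_delta A q a z) \<noteq> -1))"

definition doca_step :: "('q, 'a) doca \<Rightarrow> 'a \<Rightarrow> 'q \<times> nat \<Rightarrow> 'q \<times> nat" where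
  "doca_step A a c = (let (q, n) = c; (q', k) = d_delta A q a (n = 0) in (q', nat (int n + k)))"

definition doca_lang :: "'a set \<Rightarrow> ('q, 'a) doca \<Rightarrow> 'a list set" where
  "doca_lang \<Sigma> A = {w \<in> lists \<Sigma>. fst (fold (doca_step A) w (d_init A, 0)) \<in> d_final A}"

record ('q, 'g, 'b) vpa =
  v_states :: "'q set"
  v_init   :: "'q set"
  v_final  :: "'q set"
  v_stack  :: "'g set"
  v_call   :: "('q \<times> 'b \<times> 'q \<times> 'g) set"
  v_int    :: "('q \<times> 'b \<times> 'q) set"
  v_ret    :: "('q \<times> 'b \<times> 'g option \<times> 'q) set"  \<comment> \<open>None: return on empty stack (bottom)\<close>

text \<open>A pushdown alphabet is a triple (calls, internals, returns) of pairwise disjoint sets.\<close>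

definition vpa_wf :: "'b set \<times> 'b set \<times> 'b set \<Rightarrow> ('q, 'g, 'b) vpa \<Rightarrow> bool" where
  "vpa_wf PA V \<longleftrightarrow> (case PA of (Sc, Si, Sr) \<Rightarrow>
     finite Sc \<and> finite Si \<and> finite Sr \<and>
     Sc \<inter> Si = {} \<and> Sc \<inter> Sr = {} \<and> Si \<inter> Sr = {} \<and>
     finite (v_states V) \<and> finite (v_stack V) \<and>
     v_init V \<subseteq> v_states V \<and> v_final V \<subseteq> v_states V \<and>
     v_call V \<subseteq> v_states V \<times> Sc \<times> v_states V \<times> v_stack V \<and>
     v_int V \<subseteq> v_states V \<times> Si \<times> v_states V \<and>
     v_ret V \<subseteq> v_states V \<times> Sr \<times> insert None (Some ` v_stack V) \<times> v_states V)"

fun vpa_step :: "'b set \<times> 'b set \<times> 'b set \<Rightarrow> ('q, 'g, 'b) vpa \<Rightarrow> 'b \<Rightarrow> 'q \<times> 'g list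
    \<Rightarrow> ('q \<times> 'g list) set" where
  "vpa_step (Sc, Si, Sr) V b (q, st) =
     (if b \<in> Sc then {(q', g # st) | q' g. (q, b, q', g) \<in> v_call V}
      else if b \<in> Si then {(q', st) | q'. (q, b, q') \<in> v_int V}
      else if b \<in> Sr then
        (case st of [] \<Rightarrow> {(q', []) | q'. (q, b, None, q') \<in> v_ret V}
                  | g # st' \<Rightarrow> {(q', st') | q'. (q, b, Some g, q') \<in> v_ret V})
      else {})"

definition vpa_reach :: "'b set \<times> 'b set \<times> 'b set \<Rightarrow> ('q, 'g, 'b) vpa \<Rightarrow> 'b list
    \<Rightarrow> ('q \<times> 'g list) set" where
  "vpa_reach PA V w = fold (\<lambda>b S. \<Union>c \<in> S. vpa_step PA V b c) w {(q, []) | q. q \<in> v_init V}"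

definition vpa_lang :: "'b set \<times> 'b set \<times> 'b set \<Rightarrow> ('q, 'g, 'b) vpa \<Rightarrow> 'b list set" where
  "vpa_lang PA V = {w. (\<exists>c \<in> vpa_reach PA V w. fst c \<in> v_final V)}"

datatype mode = Cm | Im | Rm

datatype 'a tl = TL 'a mode | X   \<comment> \<open>X is the fresh internal letter x\<close>

definition tSigma :: "'a set \<Rightarrow> 'a tl set \<times> 'a tl set \<times> 'a tl set" where
  "tSigma \<Sigma> = ({TL a Cm | a. a \<in> \<Sigma>}, {TL a Im | a. a \<in> \<Sigma>} \<union> {X}, {TL a Rm | a. a \<in> \<Sigma>})"

fun p1 :: "'a tl \<Rightarrow> 'a" where
  "p1 (TL a m) = a"
| "p1 X = undefined"

definition xform :: "'a set \<Rightarrow> 'a tl list \<Rightarrow> 'a tl list \<Rightarrow> bool" where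
  "xform \<Sigma> w as \<longleftrightarrow> as \<noteq> [] \<and> (\<forall>t \<in> set as. \<exists>a m. a \<in> \<Sigma> \<and> t = TL a m) \<and>
      w = concat (map (\<lambda>i. if i = 0 then [as ! i] else [X, as ! i]) [0..<length as])"

text \<open>\<open>V\<close> is a VPA \<open>\<tilde>\<A>\<close> for the language \<open>L = \<L>(\<A>)\<close> over \<open>\<Sigma>\<close>.
 (The projection equation is imposed for nonempty words.)\<close>

definition is_tilde :: "'a set \<Rightarrow> 'a list set \<Rightarrow> ('q, 'g, 'a tl) vpa \<Rightarrow> bool" where
  "is_tilde \<Sigma> L V \<longleftrightarrow> vpa_wf (tSigma \<Sigma>) V \<and>
     (\<forall>w \<in> vpa_lang (tSigma \<Sigma>) V. \<exists>as. xform \<Sigma> w as) \<and>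
     L - {[]} = {map p1 as | as w. w \<in> vpa_lang (tSigma \<Sigma>) V \<and> xform \<Sigma> w as}"

record ('d, 'c, 'r) interp =
  dom :: "'d set"
  cn  :: "'c \<Rightarrow> 'd set"
  rn  :: "'r \<Rightarrow> ('d \<times> 'd) set"

definition interp_wf :: "('d, 'c, 'r) interp \<Rightarrow> bool" where
  "interp_wf I \<longleftrightarrow> dom I \<noteq> {} \<and> (\<forall>c. cn I c \<subseteq> dom I) \<and> (\<forall>r. rn I r \<subseteq> dom I \<times> dom I)"

definition L_path :: "('d, 'c, 'r) interp \<Rightarrow> 'r list set \<Rightarrow> 'd list \<Rightarrow> bool" where
  "L_path I L \<rho> \<longleftrightarrow> \<rho> \<noteq> [] \<and> set \<rho> \<subseteq> dom I \<and>
     (\<exists>w \<in> L. length \<rho> = length w + 1 \<and> (\<forall>i < length w. (\<rho> ! i, \<rho> ! Suc i) \<in> rn I (w ! i)))"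

definition L_reach :: "('d, 'c, 'r) interp \<Rightarrow> 'r list set \<Rightarrow> 'd \<Rightarrow> 'd \<Rightarrow> bool" where
  "L_reach I L d e \<longleftrightarrow> (\<exists>\<rho>. L_path I L \<rho> \<and> hd \<rho> = d \<and> last \<rho> = e)"

definition ExL :: "('d, 'c, 'r) interp \<Rightarrow> 'r list set \<Rightarrow> 'd set \<Rightarrow> 'd set" where
  "ExL I L C = {d \<in> dom I. \<exists>e \<in> C. L_reach I L d e}"

definition AllL :: "('d, 'c, 'r) interp \<Rightarrow> 'r list set \<Rightarrow> 'd set \<Rightarrow> 'd set" where
  "AllL I L C = dom I - ExL I L (dom I - C)"

definition SelfC :: "('d, 'c, 'r) interp \<Rightarrow> 'r \<Rightarrow> 'd set" where
  "SelfC I r = {d \<in> dom I. (d, d) \<in> rn I r}"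

definition Xstar :: "'a tl list set" where
  "Xstar = {replicate k X | k. True}"

definition friendly :: "'a set \<Rightarrow> ('d, 'c, 'a tl) interp \<Rightarrow> 'd \<Rightarrow> bool" where
  "friendly \<Sigma> I d \<longleftrightarrow> (\<forall>e. L_reach I Xstar d e \<longrightarrow>
     (\<exists>!a. a \<in> \<Sigma> \<and> (\<forall>m. (e, e) \<in> rn I (TL a m)) \<and>
            (\<forall>b \<in> \<Sigma>. b \<noteq> a \<longrightarrow> (\<forall>m. (e, e) \<notin> rn I (TL b m))) \<and> (e, e) \<notin> rn I X))"

definition C_fr :: "'a set \<Rightarrow> ('d, 'c, 'a tl) interp \<Rightarrow> 'd set" where
  "C_fr \<Sigma> I = AllL I Xstar
     (\<Union>a \<in> \<Sigma>. (\<Inter>m. SelfC I (TL a m)) \<inter>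
               (\<Inter>b \<in> \<Sigma> - {a}. \<Inter>m. dom I - SelfC I (TL b m)) \<inter> (dom I - SelfC I X))"

definition C_A :: "'a set \<Rightarrow> 'a tl list set \<Rightarrow> 'a tl list set \<Rightarrow> 'c
    \<Rightarrow> ('d, 'c, 'a tl) interp \<Rightarrow> 'd set" where
  "C_A \<Sigma> LtA LtC Acc I = C_fr \<Sigma> I \<inter> AllL I LtA (cn I Acc) \<inter> AllL I LtC (dom I - cn I Acc)"

definition represents :: "'a set \<Rightarrow> ('d, 'c, 'a tl) interp \<Rightarrow> 'd list \<Rightarrow> 'a list \<Rightarrow> bool" where
  "represents \<Sigma> I \<rho> w \<longleftrightarrow> length w = length \<rho> \<and> set w \<subseteq> \<Sigma> \<and>
     (\<forall>i < length \<rho>. \<forall>a \<in> \<Sigma>. w ! i = a \<longleftrightarrow> (\<rho> ! i, \<rho> ! i) \<in> rn I (TL a Cm))"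

definition metaword :: "'a set \<Rightarrow> (nat, 'c, 'a tl) interp \<Rightarrow> nat \<Rightarrow> bool" where
  "metaword \<Sigma> I d \<longleftrightarrow> interp_wf I \<and> d \<in> dom I \<and> friendly \<Sigma> I d \<and>
     (\<exists>n > 0. dom I = {0..<n} \<and> rn I X = {(i, Suc i) | i. Suc i < n} \<and>
        (\<forall>r. r \<noteq> X \<longrightarrow> rn I r \<subseteq> {(i, i) | i. i < n}))"

end

theory Submission imports Defs begin

lemma cw_props:
  assumes "as \<noteq> []"
  shows "length (concat (map (\<lambda>i. if i = 0 then [as ! i] else [X, as ! i]) [0..<length as])) = 2 * length as - 1
    \<and> (\<forall>i<length as. concat (map (\<lambda>i. if i = 0 then [as ! i] else [X, as ! i]) [0..<length as]) ! (2*i) = as ! i)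
    \<and> (\<forall>i. Suc i < length as \<longrightarrow> concat (map (\<lambda>i. if i = 0 then [as ! i] else [X, as ! i]) [0..<length as]) ! (2*i+1) = X)"
  using assms
proof (induction as rule: rev_induct)
  case Nil then show ?case by simp
next
  case (snoc b as)
  have eq: "map (\<lambda>i. if i = 0 then [(as@[b]) ! i] else [X, (as@[b]) ! i]) [0..<length as]
       = map (\<lambda>i. if i = 0 then [as ! i] else [X, as ! i]) [0..<length as]"
    by (rule map_cong) (auto simp: nth_append)
  show ?case
  proof (cases "as = []")
    case True then show ?thesis by simp
  next
    case False
    let ?c = "concat (map (\<lambda>i. if i = 0 then [as ! i] else [X, as ! i]) [0..<length as])"
    have IH: "length ?c = 2 * length as - 1"
      "\<forall>i<length as. ?c ! (2*i) = as ! i"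
      "\<forall>i. Suc i < length as \<longrightarrow> ?c ! (2*i+1) = X" using snoc.IH[OF False] by auto
    have c: "concat (map (\<lambda>i. if i = 0 then [(as@[b]) ! i] else [X, (as@[b]) ! i]) [0..<length (as@[b])])
        = ?c @ [X, b]" using False by (simp only: length_append_singleton upt_Suc_append[OF le0] map_append concat_append eq) simp
    have lp: "length as > 0" using False by simp
    show ?thesis unfolding c
    proof (intro conjI allI impI)
      show "length (?c @ [X, b]) = 2 * length (as @ [b]) - 1" using IH lp by simp
    next
      fix i assume "i < length (as @ [b])"
      then consider "i < length as" | "i = length as" by fastforce
      then show "(?c @ [X, b]) ! (2 * i) = (as @ [b]) ! i"
      proof cases
        case 1
        then have "2*i < length ?c" using IH by simp
        then show ?thesis using IH 1 by (simp add: nth_append)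
      next
        case 2
        then have "2*i = length ?c + 1" using IH lp by simp
        then show ?thesis using 2 by (simp add: nth_append)
      qed
    next
      fix i assume "Suc i < length (as @ [b])"
      then consider "Suc i < length as" | "Suc i = length as" by fastforce
      then show "(?c @ [X, b]) ! (2 * i + 1) = X"
      proof cases
        case 1
        then have "2*i+1 < length ?c" using IH by simp
        then show ?thesis using IH 1 by (simp add: nth_append)
      next
        case 2
        then have "2*i+1 = length ?c" using IH lp by simp
        then show ?thesis by (simp add: nth_append)
      qed
    qed
  qed
qed

lemma xform_props:
  assumes "xform \<Sigma> w as"
  shows "as \<noteq> [] \<and> length w = 2 * length as - 1 \<and> (\<forall>i<length as. w ! (2*i) = as ! i)
     \<and> (\<forall>i. Suc i < length as \<longrightarrow> w ! (2*i+1) = X)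
     \<and> (\<forall>i<length as. \<exists>a m. a \<in> \<Sigma> \<and> as ! i = TL a m)"
  using assms cw_props[of as] unfolding xform_def by auto

lemma L_reach_dom: "L_reach I L d e \<Longrightarrow> e \<in> dom I \<and> d \<in> dom I"
proof -
  assume "L_reach I L d e"
  then obtain \<rho> where p: "L_path I L \<rho>" "hd \<rho> = d" "last \<rho> = e"
    unfolding L_reach_def by blast
  have ne: "\<rho> \<noteq> []" using p(1) unfolding L_path_def by (rule conjunct1)
  have s: "set \<rho> \<subseteq> dom I" using p(1) unfolding L_path_def by (rule conjunct1[OF conjunct2])
  have "e \<in> set \<rho>" using p(3) last_in_set[OF ne] by simp
  moreover have "d \<in> set \<rho>" using p(2) hd_in_set[OF ne] by simp
  ultimately show ?thesis using s by (simp add: subset_iff)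
qed
lemma AllL_use: "d \<in> AllL I L C \<Longrightarrow> L_reach I L d e \<Longrightarrow> e \<in> C"
proof (rule ccontr)
  assume a: "d \<in> AllL I L C" "L_reach I L d e" "e \<notin> C"
  have "e \<in> dom I" "d \<in> dom I" using L_reach_dom[OF a(2)] by auto
  then have "d \<in> ExL I L (dom I - C)" unfolding ExL_def using a(2,3) by auto
  then show False using a(1) unfolding AllL_def by simp
qed

lemma Xstar_steps:
  assumes "L_path I Xstar \<rho>" "Suc i < length \<rho>"
  shows "(\<rho> ! i, \<rho> ! Suc i) \<in> rn I X"
proof -
  obtain w where w: "w \<in> Xstar" "length \<rho> = length w + 1" "\<forall>i < length w. (\<rho> ! i, \<rho> ! Suc i) \<in> rn I (w ! i)"
    using assms(1) unfolding L_path_def by blast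
  then obtain k where "w = replicate k X" unfolding Xstar_def by blast
  then show ?thesis using w assms(2) by auto
qed

lemma Xstar_prefix:
  assumes "L_path I Xstar \<rho>" "i < length \<rho>"
  shows "L_reach I Xstar (hd \<rho>) (\<rho> ! i)"
proof -
  have ne: "\<rho> \<noteq> []" and sub: "set \<rho> \<subseteq> dom I" using assms unfolding L_path_def by auto
  have "L_path I Xstar (take (Suc i) \<rho>)"
    unfolding L_path_def
  proof (intro conjI bexI)
    show "take (Suc i) \<rho> \<noteq> []" using ne by simp
    show "set (take (Suc i) \<rho>) \<subseteq> dom I" using sub set_take_subset by fastforce
    show "replicate i X \<in> Xstar" unfolding Xstar_def by auto
    show "length (take (Suc i) \<rho>) = length (replicate i X) + 1" using assms(2) by simp
    show "\<forall>j<length (replicate i X). (take (Suc i) \<rho> ! j, take (Suc i) \<rho> ! Suc j) \<in> rn I (replicate i X ! j)"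
      using Xstar_steps[OF assms(1)] assms(2) by auto
  qed
  moreover have "hd (take (Suc i) \<rho>) = hd \<rho>" using ne by (simp add: hd_take)
  moreover have "last (take (Suc i) \<rho>) = \<rho> ! i" using assms(2) ne by (auto simp add: last_conv_nth min_def intro: arg_cong[where f="nth \<rho>"])
  ultimately show ?thesis unfolding L_reach_def by metis
qed

lemma U_iff:
  assumes "e \<in> dom I"
  shows "e \<in> (\<Union>a \<in> \<Sigma>. (\<Inter>m. SelfC I (TL a m)) \<inter>
               (\<Inter>b \<in> \<Sigma> - {a}. \<Inter>m. dom I - SelfC I (TL b m)) \<inter> (dom I - SelfC I X))
     \<longleftrightarrow> (\<exists>!a. a \<in> \<Sigma> \<and> (\<forall>m. (e, e) \<in> rn I (TL a m)) \<and>
            (\<forall>b \<in> \<Sigma>. b \<noteq> a \<longrightarrow> (\<forall>m. (e, e) \<notin> rn I (TL b m))) \<and> (e, e) \<notin> rn I X)"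
proof
  assume eU: "e \<in> (\<Union>a \<in> \<Sigma>. (\<Inter>m. SelfC I (TL a m)) \<inter>
               (\<Inter>b \<in> \<Sigma> - {a}. \<Inter>m. dom I - SelfC I (TL b m)) \<inter> (dom I - SelfC I X))"
  from eU obtain a where a1: "a \<in> \<Sigma>" and a2: "e \<in> (\<Inter>m. SelfC I (TL a m))"
      and a3: "e \<in> (\<Inter>b \<in> \<Sigma> - {a}. \<Inter>m. dom I - SelfC I (TL b m))" and a4: "e \<in> dom I - SelfC I X"
      by (elim UN_E IntE)
  have f1: "\<forall>m. (e, e) \<in> rn I (TL a m)"
  proof
    fix m
    from a2 have "e \<in> SelfC I (TL a m)" by (rule INT_D) simp
    then show "(e, e) \<in> rn I (TL a m)" unfolding SelfC_def by simp
  qed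
  have f2: "\<forall>b \<in> \<Sigma>. b \<noteq> a \<longrightarrow> (\<forall>m. (e, e) \<notin> rn I (TL b m))"
  proof (intro ballI impI allI)
    fix b m assume "b \<in> \<Sigma>" "b \<noteq> a"
    then have bb: "b \<in> \<Sigma> - {a}" by simp
    from a3 bb have "e \<in> (\<Inter>m. dom I - SelfC I (TL b m))" by (rule INT_D)
    then have "e \<in> dom I - SelfC I (TL b m)" by (rule INT_D) simp
    then show "(e, e) \<notin> rn I (TL b m)" unfolding SelfC_def by simp
  qed
  have f3: "(e, e) \<notin> rn I X" using a4 unfolding SelfC_def by simp
  show "\<exists>!a. a \<in> \<Sigma> \<and> (\<forall>m. (e, e) \<in> rn I (TL a m)) \<and>
          (\<forall>b \<in> \<Sigma>. b \<noteq> a \<longrightarrow> (\<forall>m. (e, e) \<notin> rn I (TL b m))) \<and> (e, e) \<notin> rn I X"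
  proof (rule ex1I[of _ a])
    show "a \<in> \<Sigma> \<and> (\<forall>m. (e, e) \<in> rn I (TL a m)) \<and>
          (\<forall>b \<in> \<Sigma>. b \<noteq> a \<longrightarrow> (\<forall>m. (e, e) \<notin> rn I (TL b m))) \<and> (e, e) \<notin> rn I X"
      using a1 f1 f2 f3 by (intro conjI)
  next
    fix a' assume h: "a' \<in> \<Sigma> \<and> (\<forall>m. (e, e) \<in> rn I (TL a' m)) \<and>
          (\<forall>b \<in> \<Sigma>. b \<noteq> a' \<longrightarrow> (\<forall>m. (e, e) \<notin> rn I (TL b m))) \<and> (e, e) \<notin> rn I X"
    then have h1: "a' \<in> \<Sigma>" by (rule conjunct1)
    from h have h2: "(e, e) \<in> rn I (TL a' Cm)" by simp
    show "a' = a"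
    proof (rule ccontr)
      assume "a' \<noteq> a"
      then have "(e, e) \<notin> rn I (TL a' Cm)" using f2 h1 by simp
      then show False using h2 by contradiction
    qed
  qed
next
  assume "\<exists>!a. a \<in> \<Sigma> \<and> (\<forall>m. (e, e) \<in> rn I (TL a m)) \<and>
          (\<forall>b \<in> \<Sigma>. b \<noteq> a \<longrightarrow> (\<forall>m. (e, e) \<notin> rn I (TL b m))) \<and> (e, e) \<notin> rn I X"
  then have "\<exists>a. a \<in> \<Sigma> \<and> (\<forall>m. (e, e) \<in> rn I (TL a m)) \<and>
          (\<forall>b \<in> \<Sigma>. b \<noteq> a \<longrightarrow> (\<forall>m. (e, e) \<notin> rn I (TL b m))) \<and> (e, e) \<notin> rn I X"
    by (rule ex1_implies_ex)
  then obtain a where a: "a \<in> \<Sigma> \<and> (\<forall>m. (e, e) \<in> rn I (TL a m)) \<and>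
          (\<forall>b \<in> \<Sigma>. b \<noteq> a \<longrightarrow> (\<forall>m. (e, e) \<notin> rn I (TL b m))) \<and> (e, e) \<notin> rn I X" ..
  have a1: "a \<in> \<Sigma>" using a by (rule conjunct1)
  have a2: "\<forall>m. (e, e) \<in> rn I (TL a m)" using a by simp
  have a3: "\<forall>b \<in> \<Sigma>. b \<noteq> a \<longrightarrow> (\<forall>m. (e, e) \<notin> rn I (TL b m))" using a by simp
  have a4: "(e, e) \<notin> rn I X" using a by simp
  have i1: "e \<in> (\<Inter>m. SelfC I (TL a m))" using a2 assms unfolding SelfC_def by simp
  have i2: "e \<in> (\<Inter>b \<in> \<Sigma> - {a}. \<Inter>m. dom I - SelfC I (TL b m))"
  proof (rule INT_I)+
    fix b m assume "b \<in> \<Sigma> - {a}"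
    then have "(e, e) \<notin> rn I (TL b m)" using a3 by simp
    then show "e \<in> dom I - SelfC I (TL b m)" using assms unfolding SelfC_def by simp
  qed
  have i3: "e \<in> dom I - SelfC I X" using a4 assms unfolding SelfC_def by simp
  from i1 i2 i3 have "e \<in> (\<Inter>m. SelfC I (TL a m)) \<inter>
               (\<Inter>b \<in> \<Sigma> - {a}. \<Inter>m. dom I - SelfC I (TL b m)) \<inter> (dom I - SelfC I X)"
    by (intro IntI)
  then show "e \<in> (\<Union>a \<in> \<Sigma>. (\<Inter>m. SelfC I (TL a m)) \<inter>
               (\<Inter>b \<in> \<Sigma> - {a}. \<Inter>m. dom I - SelfC I (TL b m)) \<inter> (dom I - SelfC I X))"
    using a1 by (rule UN_I[rotated])
qed

lemma Cfr_iff: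
  assumes "d \<in> dom I"
  shows "d \<in> C_fr \<Sigma> I \<longleftrightarrow> friendly \<Sigma> I d"
proof
  assume A: "d \<in> C_fr \<Sigma> I"
  show "friendly \<Sigma> I d" unfolding friendly_def
  proof (intro allI impI)
    fix e assume r: "L_reach I Xstar d e"
    have ed: "e \<in> dom I" using L_reach_dom[OF r] by simp
    have "e \<in> (\<Union>a \<in> \<Sigma>. (\<Inter>m. SelfC I (TL a m)) \<inter>
               (\<Inter>b \<in> \<Sigma> - {a}. \<Inter>m. dom I - SelfC I (TL b m)) \<inter> (dom I - SelfC I X))"
      using AllL_use[OF A[unfolded C_fr_def] r] .
    then show "\<exists>!a. a \<in> \<Sigma> \<and> (\<forall>m. (e, e) \<in> rn I (TL a m)) \<and>
          (\<forall>b \<in> \<Sigma>. b \<noteq> a \<longrightarrow> (\<forall>m. (e, e) \<notin> rn I (TL b m))) \<and> (e, e) \<notin> rn I X"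
      by (rule iffD1[OF U_iff[OF ed]])
  qed
next
  assume f: "friendly \<Sigma> I d"
  let ?U = "(\<Union>a \<in> \<Sigma>. (\<Inter>m. SelfC I (TL a m)) \<inter>
               (\<Inter>b \<in> \<Sigma> - {a}. \<Inter>m. dom I - SelfC I (TL b m)) \<inter> (dom I - SelfC I X))"
  have "d \<notin> ExL I Xstar (dom I - ?U)"
  proof
    assume "d \<in> ExL I Xstar (dom I - ?U)"
    then have "\<exists>e \<in> dom I - ?U. L_reach I Xstar d e" unfolding ExL_def by simp
    then obtain e where e1: "e \<in> dom I - ?U" and e3: "L_reach I Xstar d e" by (rule bexE)
    have "\<exists>!a. a \<in> \<Sigma> \<and> (\<forall>m. (e, e) \<in> rn I (TL a m)) \<and>
          (\<forall>b \<in> \<Sigma>. b \<noteq> a \<longrightarrow> (\<forall>m. (e, e) \<notin> rn I (TL b m))) \<and> (e, e) \<notin> rn I X"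
      using f[unfolded friendly_def, rule_format, OF e3] .
    then have "e \<in> ?U" using e1 by (intro iffD2[OF U_iff]) simp_all
    then show False using e1 by simp
  qed
  then show "d \<in> C_fr \<Sigma> I" unfolding C_fr_def AllL_def using assms by simp
qed

lemma lift:
  assumes P: "L_path I Xstar \<rho>"
    and H: "\<forall>i<length \<rho>. \<forall>m. (\<rho> ! i, \<rho> ! i) \<in> rn I (TL (p1 (as ! i)) m)"
    and xf: "xform \<Sigma> w' as" and len: "length as = length \<rho>" and wV: "w' \<in> V"
  shows "L_reach I V (hd \<rho>) (last \<rho>)"
proof -
  note xp = xform_props[OF xf]
  have ne: "\<rho> \<noteq> []" and sub: "set \<rho> \<subseteq> dom I" using P unfolding L_path_def by simp_all
  define n where "n = length \<rho>"
  have n0: "n > 0" using ne n_def by simp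
  define \<rho>' where "\<rho>' = map (\<lambda>j. \<rho> ! (j div 2)) [0..<2*n]"
  have lw: "length w' = 2 * n - 1" using xp len n_def by simp
  have path: "L_path I V \<rho>'"
    unfolding L_path_def
  proof (intro conjI bexI[of _ w'])
    show "\<rho>' \<noteq> []" using n0 \<rho>'_def by simp
    show "set \<rho>' \<subseteq> dom I"
    proof
      fix x assume "x \<in> set \<rho>'"
      then obtain j where "j < 2 * n" "x = \<rho> ! (j div 2)" unfolding \<rho>'_def by auto
      then have "x \<in> set \<rho>" using n_def by simp
      then show "x \<in> dom I" using sub by blast
    qed
    show "length \<rho>' = length w' + 1" using lw n0 \<rho>'_def by simp
    show "w' \<in> V" by fact
    show "\<forall>j<length w'. (\<rho>' ! j, \<rho>' ! Suc j) \<in> rn I (w' ! j)"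
    proof (intro allI impI)
      fix j assume j: "j < length w'"
      have r1: "\<rho>' ! j = \<rho> ! (j div 2)" and r2: "\<rho>' ! Suc j = \<rho> ! (Suc j div 2)"
      proof -
        have "j < 2 * n" "Suc j < 2 * n" using j lw by simp_all
        then show "\<rho>' ! j = \<rho> ! (j div 2)" "\<rho>' ! Suc j = \<rho> ! (Suc j div 2)"
          unfolding \<rho>'_def by (simp_all del: upt_Suc)
      qed
      show "(\<rho>' ! j, \<rho>' ! Suc j) \<in> rn I (w' ! j)"
      proof (cases "even j")
        case True
        then obtain i where i: "j = 2 * i" by blast
        have il: "i < length as" using j lw i len n_def by simp
        have "w' ! j = as ! i" using xp il i by simp
        moreover obtain a m where "as ! i = TL a m" using xp il by blast
        moreover have "Suc j div 2 = i" "j div 2 = i" using i by simp_all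
        ultimately show ?thesis using r1 r2 H il len by (metis p1.simps(1))
      next
        case False
        then obtain i where i: "j = 2 * i + 1" using oddE by blast
        have il: "Suc i < length as" using j lw i len n_def by simp
        have "w' ! j = X" using xp il i by simp
        moreover have "Suc j div 2 = Suc i" "j div 2 = i" using i by simp_all
        moreover have "(\<rho> ! i, \<rho> ! Suc i) \<in> rn I X" using Xstar_steps[OF P] il len by simp
        ultimately show ?thesis using r1 r2 by simp
      qed
    qed
  qed
  have "hd \<rho>' = hd \<rho>" using n0 ne \<rho>'_def by (simp add: hd_map hd_conv_nth)
  moreover have "last \<rho>' = last \<rho>"
  proof -
    have "(2 * n - 1) div 2 = n - 1" using n0 by arith
    then show ?thesis using n0 ne \<rho>'_def n_def by (simp add: last_map last_conv_nth)
  qed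
  ultimately show ?thesis using path unfolding L_reach_def by metis
qed

lemma mw_path:
  assumes mw: "metaword \<Sigma> I d" and ne: "\<rho> \<noteq> []" and sub: "set \<rho> \<subseteq> dom I" and hd: "hd \<rho> = d"
    and lenr: "length \<rho> = length w' + 1"
    and steps: "\<forall>i<length w'. (\<rho> ! i, \<rho> ! Suc i) \<in> rn I (w' ! i)"
    and xf: "xform \<Sigma> w' as"
  shows "last \<rho> = d + length as - 1 \<and> (\<forall>i<length as. d + i \<in> dom I \<and> (d + i, d + i) \<in> rn I (as ! i))"
proof -
  note xp = xform_props[OF xf]
  obtain n where n: "dom I = {0..<n}" "rn I X = {(i, Suc i) | i. Suc i < n}"
    "\<forall>r. r \<noteq> X \<longrightarrow> rn I r \<subseteq> {(i, i) | i. i < n}"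
    using mw unfolding metaword_def by blast
  have la: "length as > 0" using xp by simp
  have lw: "length w' = 2 * length as - 1" using xp by simp
  have lr: "length \<rho> = 2 * length as" using lw lenr la by simp
  have pos: "\<forall>j<length \<rho>. \<rho> ! j = d + j div 2"
  proof (intro allI impI)
    fix j show "j < length \<rho> \<Longrightarrow> \<rho> ! j = d + j div 2"
    proof (induction j)
      case 0 then show ?case using hd ne by (simp add: hd_conv_nth)
    next
      case (Suc j)
      then have IH: "\<rho> ! j = d + j div 2" by simp
      have jw: "j < length w'" using Suc.prems lenr by simp
      have st: "(\<rho> ! j, \<rho> ! Suc j) \<in> rn I (w' ! j)" using steps jw by simp
      show ?case
      proof (cases "even j")
        case True
        then obtain i where i: "j = 2 * i" by blast
        have il: "i < length as" using jw lw i by simp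
        have "w' ! j = as ! i" using xp il i by simp
        moreover obtain a m where "as ! i = TL a m" using xp il by blast
        ultimately have "w' ! j \<noteq> X" by simp
        then have "(\<rho> ! j, \<rho> ! Suc j) \<in> {(i, i) | i. i < n}" using st n(3) by blast
        then have "\<rho> ! Suc j = \<rho> ! j" by simp
        moreover have "Suc j div 2 = j div 2" using i by simp
        ultimately show ?thesis using IH by simp
      next
        case False
        then obtain i where i: "j = 2 * i + 1" using oddE by blast
        have il: "Suc i < length as" using jw lw i by simp
        have "w' ! j = X" using xp il i by simp
        then have "(\<rho> ! j, \<rho> ! Suc j) \<in> {(i, Suc i) | i. Suc i < n}" using st n(2) by simp
        then have "\<rho> ! Suc j = Suc (\<rho> ! j)" by auto
        moreover have "Suc j div 2 = Suc (j div 2)" using i by simp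
        ultimately show ?thesis using IH by simp
      qed
    qed
  qed
  have "last \<rho> = d + length as - 1"
  proof -
    have e1: "(2 * length as - 1) div 2 = length as - 1" using la by arith
    have e2: "d + (length as - 1) = d + length as - 1" using la by arith
    have "last \<rho> = \<rho> ! (2 * length as - 1)" using ne lr by (simp add: last_conv_nth)
    also have "\<dots> = d + (2 * length as - 1) div 2" using pos lr la by simp
    finally show ?thesis using e1 e2 by simp
  qed
  moreover have "\<forall>i<length as. d + i \<in> dom I \<and> (d + i, d + i) \<in> rn I (as ! i)"
  proof (intro allI impI conjI)
    fix i assume il: "i < length as"
    have a: "\<rho> ! (2 * i) = d + i" using pos il lr by simp
    have b: "\<rho> ! Suc (2 * i) = d + i" using pos il lr by simp
    have "2 * i < length \<rho>" using il lr by simp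
    then have "\<rho> ! (2 * i) \<in> set \<rho>" by (rule nth_mem)
    then show "d + i \<in> dom I" using a sub by auto
    have "2 * i < length w'" using il lw by simp
    then have "(\<rho> ! (2 * i), \<rho> ! Suc (2 * i)) \<in> rn I (w' ! (2 * i))" using steps by blast
    then show "(d + i, d + i) \<in> rn I (as ! i)" using a b xp il by simp
  qed
  ultimately show ?thesis by blast
qed

lemma mw_reach:
  assumes mw: "metaword \<Sigma> I d" and dom: "d + i \<in> dom I"
  shows "L_reach I Xstar d (d + i)"
proof -
  obtain n where n: "dom I = {0..<n}" "rn I X = {(i, Suc i) | i. Suc i < n}"
    using mw unfolding metaword_def by blast
  have lt: "d + i < n" using dom n by simp
  define \<rho> where "\<rho> = map (\<lambda>j. d + j) [0..<Suc i]"
  have "L_path I Xstar \<rho>" unfolding L_path_def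
  proof (intro conjI bexI[of _ "replicate i X"])
    show "\<rho> \<noteq> []" using \<rho>_def by simp
    show "set \<rho> \<subseteq> dom I" using \<rho>_def n lt by auto
    show "replicate i X \<in> Xstar" unfolding Xstar_def by auto
    show "length \<rho> = length (replicate i X) + 1" using \<rho>_def by simp
    show "\<forall>j<length (replicate i X). (\<rho> ! j, \<rho> ! Suc j) \<in> rn I (replicate i X ! j)"
    proof (intro allI impI)
      fix j assume j: "j < length (replicate i X)"
      then have "j < i" by simp
      then have "\<rho> ! j = d + j" "\<rho> ! Suc j = Suc (d + j)" using \<rho>_def by (simp_all del: upt_Suc)
      moreover have "Suc (d + j) < n" using \<open>j < i\<close> lt by simp
      ultimately show "(\<rho> ! j, \<rho> ! Suc j) \<in> rn I (replicate i X ! j)" using n(2) \<open>j < i\<close> by simp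
    qed
  qed
  moreover have "hd \<rho> = d" "last \<rho> = d + i" using \<rho>_def by (simp_all del: upt_Suc add: hd_map last_map)
  ultimately show ?thesis unfolding L_reach_def by blast
qed

lemma part1_aux:
  assumes T: "is_tilde \<Sigma> L V" and A: "d \<in> AllL I (vpa_lang (tSigma \<Sigma>) V) C"
    and P: "L_path I Xstar \<rho>" and hd: "hd \<rho> = d" and len: "length w = length \<rho>"
    and H0: "\<forall>i<length \<rho>. \<forall>m. (\<rho> ! i, \<rho> ! i) \<in> rn I (TL (w ! i) m)"
    and wL: "w \<in> L"
  shows "last \<rho> \<in> C"
proof -
  have ne: "\<rho> \<noteq> []" using P unfolding L_path_def by simp
  then have "w \<noteq> []" using len by auto
  then have "w \<in> L - {[]}" using wL by simp
  also have "L - {[]} = {map p1 as | as w. w \<in> vpa_lang (tSigma \<Sigma>) V \<and> xform \<Sigma> w as}"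
    using T unfolding is_tilde_def by (elim conjE)
  finally obtain as w' where w: "w = map p1 as" and wV: "w' \<in> vpa_lang (tSigma \<Sigma>) V"
    and xf: "xform \<Sigma> w' as" by blast
  have la: "length as = length \<rho>" using w len by simp
  have H: "\<forall>i<length \<rho>. \<forall>m. (\<rho> ! i, \<rho> ! i) \<in> rn I (TL (p1 (as ! i)) m)"
    using H0 w la by simp
  have "L_reach I (vpa_lang (tSigma \<Sigma>) V) (hd \<rho>) (last \<rho>)"
    by (rule lift[OF P H xf la wV])
  then show ?thesis using AllL_use[OF A] hd by simp
qed

lemma upd_L_path: "L_path (I\<lparr>cn := c\<rparr>) L = L_path I L"
  by (rule ext) (simp add: L_path_def)

lemma upd_L_reach: "L_reach (I\<lparr>cn := c\<rparr>) L = L_reach I L"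
  unfolding L_reach_def upd_L_path by (rule refl)

lemma upd_AllL: "AllL (I\<lparr>cn := c\<rparr>) L C = AllL I L C"
  unfolding AllL_def ExL_def upd_L_reach by simp

lemma upd_C_fr: "C_fr \<Sigma> (I\<lparr>cn := c\<rparr>) = C_fr \<Sigma> I"
  unfolding C_fr_def upd_AllL by (simp add: SelfC_def)

lemma mw_word:
  assumes mw: "metaword \<Sigma> I d" and T: "is_tilde \<Sigma> L V"
    and R: "L_reach I (vpa_lang (tSigma \<Sigma>) V) d e"
  shows "\<exists>u. u \<in> L \<and> u \<noteq> [] \<and> e = d + length u - 1 \<and>
     (\<forall>i<length u. u ! i \<in> \<Sigma> \<and> d + i \<in> dom I \<and> (\<exists>m. (d + i, d + i) \<in> rn I (TL (u ! i) m)))"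
proof -
  obtain \<rho> where P: "L_path I (vpa_lang (tSigma \<Sigma>) V) \<rho>" and hd: "hd \<rho> = d" and la: "last \<rho> = e"
    using R unfolding L_reach_def by blast
  have ne: "\<rho> \<noteq> []" and sub: "set \<rho> \<subseteq> dom I" using P unfolding L_path_def by simp_all
  obtain w' where wV: "w' \<in> vpa_lang (tSigma \<Sigma>) V" and lenr: "length \<rho> = length w' + 1"
    and steps: "\<forall>i<length w'. (\<rho> ! i, \<rho> ! Suc i) \<in> rn I (w' ! i)"
    using P unfolding L_path_def by blast
  obtain as where xf: "xform \<Sigma> w' as" using T wV unfolding is_tilde_def by blast
  note xp = xform_props[OF xf]
  note mp = mw_path[OF mw ne sub hd lenr steps xf]
  have "map p1 as \<in> {map p1 as | as w. w \<in> vpa_lang (tSigma \<Sigma>) V \<and> xform \<Sigma> w as}"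
    using wV xf by blast
  also have "{map p1 as | as w. w \<in> vpa_lang (tSigma \<Sigma>) V \<and> xform \<Sigma> w as} = L - {[]}"
    using T unfolding is_tilde_def by (elim conjE) (rule sym)
  finally have uL: "map p1 as \<in> L - {[]}" .
  show ?thesis
  proof (intro exI conjI)
    show "map p1 as \<in> L" using uL by simp
    show "map p1 as \<noteq> []" using uL by simp
    show "e = d + length (map p1 as) - 1" using mp la by simp
    show "\<forall>i<length (map p1 as). map p1 as ! i \<in> \<Sigma> \<and> d + i \<in> dom I \<and>
        (\<exists>m. (d + i, d + i) \<in> rn I (TL (map p1 as ! i) m))"
    proof (intro allI impI)
      fix i assume "i < length (map p1 as)"
      then have il: "i < length as" by simp
      obtain a m where am: "a \<in> \<Sigma>" "as ! i = TL a m" using xp il by blast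
      show "map p1 as ! i \<in> \<Sigma> \<and> d + i \<in> dom I \<and>
        (\<exists>m. (d + i, d + i) \<in> rn I (TL (map p1 as ! i) m))"
      proof -
        have "(d + i, d + i) \<in> rn I (as ! i)" "d + i \<in> dom I" using mp il by simp_all
        then show ?thesis using am il by auto
      qed
    qed
  qed
qed

lemma mw_unique:
  assumes mw: "metaword \<Sigma> I d" and dom: "d + i \<in> dom I"
    and a: "a \<in> \<Sigma>" "(d + i, d + i) \<in> rn I (TL a m)"
    and b: "b \<in> \<Sigma>" "(d + i, d + i) \<in> rn I (TL b m')"
  shows "a = b"
proof -
  have R: "L_reach I Xstar d (d + i)" by (rule mw_reach[OF mw dom])
  have f: "friendly \<Sigma> I d" using mw unfolding metaword_def by simp
  have "\<exists>!a. a \<in> \<Sigma> \<and> (\<forall>m. (d + i, d + i) \<in> rn I (TL a m)) \<and>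
            (\<forall>b \<in> \<Sigma>. b \<noteq> a \<longrightarrow> (\<forall>m. (d + i, d + i) \<notin> rn I (TL b m))) \<and> (d + i, d + i) \<notin> rn I X"
    using f[unfolded friendly_def, rule_format, OF R] .
  then have "\<exists>a. a \<in> \<Sigma> \<and> (\<forall>m. (d + i, d + i) \<in> rn I (TL a m)) \<and>
            (\<forall>b \<in> \<Sigma>. b \<noteq> a \<longrightarrow> (\<forall>m. (d + i, d + i) \<notin> rn I (TL b m))) \<and> (d + i, d + i) \<notin> rn I X"
    by (rule ex1_implies_ex)
  then obtain c where c: "\<forall>b \<in> \<Sigma>. b \<noteq> c \<longrightarrow> (\<forall>m. (d + i, d + i) \<notin> rn I (TL b m))" by blast
  have "a = c" using c a by blast
  moreover have "b = c" using c b by blast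
  ultimately show ?thesis by simp
qed

theorem lemma3p3:
  fixes \<Sigma> :: "'a set"
    and A :: "('q, 'a) doca" and Cc :: "('p, 'a) doca"
    and VA :: "('q1, 'g1, 'a tl) vpa"
    and VC :: "('q2, 'g2, 'a tl) vpa"
    and Acc :: 'c
  assumes "finite \<Sigma>"
    and "doca_wf \<Sigma> A" and "doca_wf \<Sigma> Cc"
    and "doca_lang \<Sigma> Cc = lists \<Sigma> - doca_lang \<Sigma> A"
    and "is_tilde \<Sigma> (doca_lang \<Sigma> A) VA"
    and "is_tilde \<Sigma> (doca_lang \<Sigma> Cc) VC"
  shows "(\<forall>(I :: ('d, 'c, 'a tl) interp) d.
            interp_wf I \<and> d \<in> C_A \<Sigma> (vpa_lang (tSigma \<Sigma>) VA) (vpa_lang (tSigma \<Sigma>) VC) Acc I \<longrightarrow>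
              friendly \<Sigma> I d \<and>
              (\<forall>\<rho> w. L_path I Xstar \<rho> \<and> hd \<rho> = d \<and> represents \<Sigma> I \<rho> w \<longrightarrow>
                 (last \<rho> \<in> cn I Acc \<longleftrightarrow> w \<in> doca_lang \<Sigma> A)))
       \<and> (\<forall>(I :: (nat, 'c, 'a tl) interp) d. metaword \<Sigma> I d \<longrightarrow>
            (\<exists>S \<subseteq> dom I. d \<in> C_A \<Sigma> (vpa_lang (tSigma \<Sigma>) VA) (vpa_lang (tSigma \<Sigma>) VC) Acc
                                 (I\<lparr>cn := (cn I)(Acc := S)\<rparr>)))"
proof (intro conjI allI impI)
  fix I :: "('d, 'c, 'a tl) interp" and d
  assume "interp_wf I \<and> d \<in> C_A \<Sigma> (vpa_lang (tSigma \<Sigma>) VA) (vpa_lang (tSigma \<Sigma>) VC) Acc I"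
  then have dC: "d \<in> C_A \<Sigma> (vpa_lang (tSigma \<Sigma>) VA) (vpa_lang (tSigma \<Sigma>) VC) Acc I" by simp
  have c1: "d \<in> C_fr \<Sigma> I" and c2: "d \<in> AllL I (vpa_lang (tSigma \<Sigma>) VA) (cn I Acc)"
    and c3: "d \<in> AllL I (vpa_lang (tSigma \<Sigma>) VC) (dom I - cn I Acc)"
    using dC unfolding C_A_def by simp_all
  have dd: "d \<in> dom I" using c2 unfolding AllL_def by simp
  show fr: "friendly \<Sigma> I d" using Cfr_iff[OF dd] c1 by simp
  fix \<rho> w
  assume "L_path I Xstar \<rho> \<and> hd \<rho> = d \<and> represents \<Sigma> I \<rho> w"
  then have P: "L_path I Xstar \<rho>" and hd: "hd \<rho> = d" and rep: "represents \<Sigma> I \<rho> w" by simp_all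
  have len: "length w = length \<rho>" and ws: "set w \<subseteq> \<Sigma>"
    and repi: "\<forall>i < length \<rho>. \<forall>a \<in> \<Sigma>. w ! i = a \<longleftrightarrow> (\<rho> ! i, \<rho> ! i) \<in> rn I (TL a Cm)"
    using rep unfolding represents_def by simp_all
  have H0: "\<forall>i<length \<rho>. \<forall>m. (\<rho> ! i, \<rho> ! i) \<in> rn I (TL (w ! i) m)"
  proof (intro allI impI)
    fix i m assume il: "i < length \<rho>"
    have R: "L_reach I Xstar d (\<rho> ! i)" using Xstar_prefix[OF P il] hd by simp
    have "\<exists>!a. a \<in> \<Sigma> \<and> (\<forall>m. (\<rho> ! i, \<rho> ! i) \<in> rn I (TL a m)) \<and>
          (\<forall>b \<in> \<Sigma>. b \<noteq> a \<longrightarrow> (\<forall>m. (\<rho> ! i, \<rho> ! i) \<notin> rn I (TL b m))) \<and> (\<rho> ! i, \<rho> ! i) \<notin> rn I X"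
      using fr[unfolded friendly_def, rule_format, OF R] .
    then have "\<exists>a. a \<in> \<Sigma> \<and> (\<forall>m. (\<rho> ! i, \<rho> ! i) \<in> rn I (TL a m))"
      by (elim ex1E) blast
    then obtain a where a1: "a \<in> \<Sigma>" and a2: "\<forall>m. (\<rho> ! i, \<rho> ! i) \<in> rn I (TL a m)" by blast
    have "w ! i = a" using repi il a1 a2 by simp
    then show "(\<rho> ! i, \<rho> ! i) \<in> rn I (TL (w ! i) m)" using a2 by simp
  qed
  show "last \<rho> \<in> cn I Acc \<longleftrightarrow> w \<in> doca_lang \<Sigma> A"
  proof
    assume "w \<in> doca_lang \<Sigma> A"
    then show "last \<rho> \<in> cn I Acc" using part1_aux[OF assms(5) c2 P hd len H0] by simp
  next
    assume l: "last \<rho> \<in> cn I Acc"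
    show "w \<in> doca_lang \<Sigma> A"
    proof (rule ccontr)
      assume "w \<notin> doca_lang \<Sigma> A"
      then have "w \<in> doca_lang \<Sigma> Cc" using assms(4) ws by (simp add: in_listsI subsetD)
      then have "last \<rho> \<in> dom I - cn I Acc" using part1_aux[OF assms(6) c3 P hd len H0] by simp
      then show False using l by simp
    qed
  qed
next
  fix I :: "(nat, 'c, 'a tl) interp" and d
  assume mw: "metaword \<Sigma> I d"
  have dd: "d \<in> dom I" and fr: "friendly \<Sigma> I d" using mw unfolding metaword_def by simp_all
  define S where "S = {e \<in> dom I. L_reach I (vpa_lang (tSigma \<Sigma>) VA) d e}"
  let ?I = "I\<lparr>cn := (cn I)(Acc := S)\<rparr>"
  have c1: "d \<in> C_fr \<Sigma> I" using Cfr_iff[OF dd] fr by simp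
  have c2: "d \<in> AllL I (vpa_lang (tSigma \<Sigma>) VA) S"
    unfolding AllL_def ExL_def S_def using dd by auto
  have "d \<notin> ExL I (vpa_lang (tSigma \<Sigma>) VC) (dom I - (dom I - S))"
  proof
    assume "d \<in> ExL I (vpa_lang (tSigma \<Sigma>) VC) (dom I - (dom I - S))"
    then obtain e where eS: "e \<in> S" and rC: "L_reach I (vpa_lang (tSigma \<Sigma>) VC) d e"
      unfolding ExL_def by blast
    have rA: "L_reach I (vpa_lang (tSigma \<Sigma>) VA) d e" using eS unfolding S_def by simp
    obtain u where u: "u \<in> doca_lang \<Sigma> A" "u \<noteq> []" "e = d + length u - 1"
      "\<forall>i<length u. u ! i \<in> \<Sigma> \<and> d + i \<in> dom I \<and> (\<exists>m. (d + i, d + i) \<in> rn I (TL (u ! i) m))"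
      using mw_word[OF mw assms(5) rA] by blast
    obtain v where v: "v \<in> doca_lang \<Sigma> Cc" "v \<noteq> []" "e = d + length v - 1"
      "\<forall>i<length v. v ! i \<in> \<Sigma> \<and> d + i \<in> dom I \<and> (\<exists>m. (d + i, d + i) \<in> rn I (TL (v ! i) m))"
      using mw_word[OF mw assms(6) rC] by blast
    have "length u > 0" "length v > 0" using u(2) v(2) by simp_all
    then have ll: "length u = length v" using u(3) v(3) by arith
    have "u = v"
    proof (rule nth_equalityI)
      show "length u = length v" by fact
      fix i assume il: "i < length u"
      obtain m where m: "(d + i, d + i) \<in> rn I (TL (u ! i) m)" using u(4) il by blast
      obtain m' where m': "(d + i, d + i) \<in> rn I (TL (v ! i) m')" using v(4) il ll by auto
      show "u ! i = v ! i"
        by (rule mw_unique[OF mw _ _ m _ m']) (use u(4) v(4) il ll in auto)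
    qed
    then show False using u(1) v(1) assms(4) by simp
  qed
  then have c3: "d \<in> AllL I (vpa_lang (tSigma \<Sigma>) VC) (dom I - S)"
    unfolding AllL_def using dd by simp
  have "d \<in> C_A \<Sigma> (vpa_lang (tSigma \<Sigma>) VA) (vpa_lang (tSigma \<Sigma>) VC) Acc ?I"
    unfolding C_A_def upd_C_fr upd_AllL using c1 c2 c3 by simp
  moreover have "S \<subseteq> dom I" unfolding S_def by blast
  ultimately show "\<exists>S' \<subseteq> dom I. d \<in> C_A \<Sigma> (vpa_lang (tSigma \<Sigma>) VA) (vpa_lang (tSigma \<Sigma>) VC) Acc
                                 (I\<lparr>cn := (cn I)(Acc := S')\<rparr>)"
    by blast
qed

end
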